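(* Let $\Gamma\neq\mathbb N$ be a numerical semigroup that is a complete intersection. Then $\mathrm e(\Gamma)\le \log_2(\mathrm c(\Gamma))+1$.
   Context: A numerical semigroup $\Gamma$ is a submonoid of $(\mathbb N,+)$ with finite complement in $\mathbb N$. It has a unique minimal generating system $\{r_0,\ldots,r_h\}$, whose cardinality is the embedding dimension $\mathrm e(\Gamma)$. The Frobenius number $\mathrm F(\Gamma)$ is the largest integer not in $\Gamma$, and the conductor is $\mathrm c(\Gamma)=\mathrm F(\Gamma)+1$. Let $\varphi:\mathbb N^{h+1}\to\Gamma$, $\varphi(a)=\sum a_ir_i$; a presentation of $\Gamma$ is a generating set of the congruence $\ker\varphi=\{(a,b):\varphi(a)=\varphi(b)\}$, and a minimal presentation is an inclusion-minimal one (its cardinality is always at least $\mathrm e(\Gamma)-1$). $\Gamma$ is a complete intersection if a minimal presentation has cardinality $\mathrm e(\Gamma)-1$. *)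

theory Defs
  imports Complex_Main
begin

definition numerical_semigroup :: "nat set \<Rightarrow> bool" where
  "numerical_semigroup S \<longleftrightarrow> 0 \<in> S \<and> (\<forall>x\<in>S. \<forall>y\<in>S. x + y \<in> S) \<and> finite (UNIV - S)"

definition monoid_gen :: "nat set \<Rightarrow> nat set" where
  "monoid_gen A = {x. \<exists>B f. finite B \<and> B \<subseteq> A \<and> x = (\<Sum>r\<in>B. f r * r)}"

definition is_min_gen_sys :: "nat set \<Rightarrow> nat set \<Rightarrow> bool" where
  "is_min_gen_sys S A \<longleftrightarrow> monoid_gen A = S \<and> (\<forall>B. B \<subset> A \<longrightarrow> monoid_gen B \<noteq> S)"

definition frobenius :: "nat set \<Rightarrow> nat" where
  "frobenius S = Max (UNIV - S)"

definition conductor :: "nat set \<Rightarrow> nat" where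
  "conductor S = frobenius S + 1"

text \<open>N^A: the generators r in A are used as indices; a factorization is a function vanishing off A.\<close>
definition factorizations :: "nat set \<Rightarrow> (nat \<Rightarrow> nat) set" where
  "factorizations A = {a. \<forall>r. r \<notin> A \<longrightarrow> a r = 0}"

definition factor_eval :: "nat set \<Rightarrow> (nat \<Rightarrow> nat) \<Rightarrow> nat" where
  "factor_eval A a = (\<Sum>r\<in>A. a r * r)"

definition kernel_congruence :: "nat set \<Rightarrow> ((nat \<Rightarrow> nat) \<times> (nat \<Rightarrow> nat)) set" where
  "kernel_congruence A = {(a, b). a \<in> factorizations A \<and> b \<in> factorizations A \<and>
      factor_eval A a = factor_eval A b}"

inductive_set cong_gen :: "nat set \<Rightarrow> ((nat \<Rightarrow> nat) \<times> (nat \<Rightarrow> nat)) set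
    \<Rightarrow> ((nat \<Rightarrow> nat) \<times> (nat \<Rightarrow> nat)) set"
  for A :: "nat set" and \<rho> :: "((nat \<Rightarrow> nat) \<times> (nat \<Rightarrow> nat)) set" where
  base: "(a, b) \<in> \<rho> \<Longrightarrow> (a, b) \<in> cong_gen A \<rho>"
| refl: "a \<in> factorizations A \<Longrightarrow> (a, a) \<in> cong_gen A \<rho>"
| sym: "(a, b) \<in> cong_gen A \<rho> \<Longrightarrow> (b, a) \<in> cong_gen A \<rho>"
| trans: "(a, b) \<in> cong_gen A \<rho> \<Longrightarrow> (b, c) \<in> cong_gen A \<rho> \<Longrightarrow> (a, c) \<in> cong_gen A \<rho>"
| transl: "(a, b) \<in> cong_gen A \<rho> \<Longrightarrow> c \<in> factorizations A \<Longrightarrow>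
     ((\<lambda>r. a r + c r), (\<lambda>r. b r + c r)) \<in> cong_gen A \<rho>"

definition is_presentation :: "nat set \<Rightarrow> ((nat \<Rightarrow> nat) \<times> (nat \<Rightarrow> nat)) set \<Rightarrow> bool" where
  "is_presentation A \<rho> \<longleftrightarrow> \<rho> \<subseteq> kernel_congruence A \<and> cong_gen A \<rho> = kernel_congruence A"

definition is_minimal_presentation :: "nat set \<Rightarrow> ((nat \<Rightarrow> nat) \<times> (nat \<Rightarrow> nat)) set \<Rightarrow> bool" where
  "is_minimal_presentation A \<rho> \<longleftrightarrow> is_presentation A \<rho> \<and> (\<forall>\<sigma>. \<sigma> \<subset> \<rho> \<longrightarrow> \<not> is_presentation A \<sigma>)"

definition complete_intersection :: "nat set \<Rightarrow> nat set \<Rightarrow> bool" where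
  "complete_intersection S A \<longleftrightarrow> is_min_gen_sys S A \<and>
     (\<exists>\<rho>. finite \<rho> \<and> is_minimal_presentation A \<rho> \<and> card \<rho> = card A - 1)"

end

theory Submission
  imports Defs "HOL-Library.Function_Algebras"
begin


definition sub :: "(nat \<Rightarrow> nat) \<Rightarrow> nat set \<Rightarrow> bool" where
  "sub x B \<longleftrightarrow> (\<forall>k. k \<notin> B \<longrightarrow> x k = 0)"

lemma sum_app: "(sum F S) x = sum (\<lambda>i. F i x) S"
  by (induction S rule: infinite_finite_induct) auto

lemma mg_sum: "finite B \<Longrightarrow> B \<subseteq> A \<Longrightarrow> (\<Sum>r\<in>B. f r * r) \<in> monoid_gen A"
  unfolding monoid_gen_def by blast

lemma mg_zero: "0 \<in> monoid_gen A"
  using mg_sum[of "{}" A] by simp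

lemma mg_add:
  assumes "x \<in> monoid_gen A" "y \<in> monoid_gen A"
  shows "x + y \<in> monoid_gen A"
proof -
  obtain B1 f1 where b1: "finite B1" "B1 \<subseteq> A" "x = (\<Sum>r\<in>B1. f1 r * r)"
    using assms(1) unfolding monoid_gen_def by blast
  obtain B2 f2 where b2: "finite B2" "B2 \<subseteq> A" "y = (\<Sum>r\<in>B2. f2 r * r)"
    using assms(2) unfolding monoid_gen_def by blast
  define f where "f r = (if r \<in> B1 then f1 r else 0) + (if r \<in> B2 then f2 r else 0)" for r
  have fin: "finite (B1 \<union> B2)" using b1 b2 by auto
  have "(\<Sum>r\<in>B1 \<union> B2. f r * r) = (\<Sum>r\<in>B1 \<union> B2. (if r \<in> B1 then f1 r * r else 0))
      + (\<Sum>r\<in>B1 \<union> B2. (if r \<in> B2 then f2 r * r else 0))"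
    unfolding f_def by (auto simp: sum.distrib[symmetric] distrib_right intro!: sum.cong)
  also have "\<dots> = x + y"
    using fin b1 b2 by (simp add: sum.inter_restrict[symmetric] Int_absorb1 Int_absorb2)
  finally show ?thesis using mg_sum[OF fin, of A f] b1 b2 by auto
qed

lemma mg_mult:
  assumes "x \<in> monoid_gen A" shows "k * x \<in> monoid_gen A"
proof -
  obtain B f where b: "finite B" "B \<subseteq> A" "x = (\<Sum>r\<in>B. f r * r)"
    using assms unfolding monoid_gen_def by blast
  have "k * x = (\<Sum>r\<in>B. (k * f r) * r)" using b by (simp add: sum_distrib_left mult.assoc)
  then show ?thesis using mg_sum[OF b(1) b(2)] by metis
qed

lemma mg_mono: "A \<subseteq> A' \<Longrightarrow> monoid_gen A \<subseteq> monoid_gen A'"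
  unfolding monoid_gen_def by blast

lemma min_gen_irred:
  assumes "is_min_gen_sys S A" "a \<in> A"
  shows "a \<notin> monoid_gen (A - {a})"
proof
  assume ha: "a \<in> monoid_gen (A - {a})"
  have "monoid_gen A \<subseteq> monoid_gen (A - {a})"
  proof
    fix x assume "x \<in> monoid_gen A"
    then obtain B f where b: "finite B" "B \<subseteq> A" "x = (\<Sum>r\<in>B. f r * r)"
      unfolding monoid_gen_def by blast
    have x1: "(\<Sum>r\<in>B - {a}. f r * r) \<in> monoid_gen (A - {a})"
      using b by (intro mg_sum) auto
    show "x \<in> monoid_gen (A - {a})"
    proof (cases "a \<in> B")
      case True
      then have "x = f a * a + (\<Sum>r\<in>B - {a}. f r * r)" using b by (simp add: sum.remove)
      then show ?thesis using mg_add[OF mg_mult[OF ha] x1] by simp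
    next
      case False
      then have "B - {a} = B" by auto
      then show ?thesis using x1 b by simp
    qed
  qed
  then have "monoid_gen (A - {a}) = S"
    using mg_mono[of "A - {a}" A] assms(1) unfolding is_min_gen_sys_def by auto
  moreover have "A - {a} \<subset> A" using assms(2) by auto
  ultimately show False using assms(1) unfolding is_min_gen_sys_def by blast
qed

lemma zero_notin: "is_min_gen_sys S A \<Longrightarrow> 0 \<notin> A"
  using min_gen_irred mg_zero by blast

lemma phi_sub:
  assumes "finite A" "B \<subseteq> A" "sub x B"
  shows "factor_eval A x = (\<Sum>r\<in>B. x r * r)"
  unfolding factor_eval_def using assms
  by (intro sum.mono_neutral_right) (auto simp: sub_def)



definition step :: "nat set \<Rightarrow> ((nat \<Rightarrow> nat) \<times> (nat \<Rightarrow> nat)) set \<Rightarrow> (nat \<Rightarrow> nat) \<Rightarrow> (nat \<Rightarrow> nat) \<Rightarrow> bool" where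
  "step A \<rho> x y \<longleftrightarrow> (\<exists>a b c. ((a, b) \<in> \<rho> \<or> (b, a) \<in> \<rho>) \<and> c \<in> factorizations A \<and>
      x = (\<lambda>r. a r + c r) \<and> y = (\<lambda>r. b r + c r))"

lemma step_sym: "step A \<rho> x y \<Longrightarrow> step A \<rho> y x"
  unfolding step_def by blast

lemma steps_sym: "(step A \<rho>)\<^sup>*\<^sup>* x y \<Longrightarrow> (step A \<rho>)\<^sup>*\<^sup>* y x"
  by (induction rule: rtranclp_induct) (auto intro: converse_rtranclp_into_rtranclp step_sym)

lemma step_transl: "step A \<rho> x y \<Longrightarrow> c \<in> factorizations A \<Longrightarrow>
    step A \<rho> (\<lambda>r. x r + c r) (\<lambda>r. y r + c r)"
  unfolding step_def
proof (elim exE conjE)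
  fix a b c'
  assume h: "(a, b) \<in> \<rho> \<or> (b, a) \<in> \<rho>" "c' \<in> factorizations A" "x = (\<lambda>r. a r + c' r)"
    "y = (\<lambda>r. b r + c' r)" "c \<in> factorizations A"
  show "\<exists>a b ca. ((a, b) \<in> \<rho> \<or> (b, a) \<in> \<rho>) \<and> ca \<in> factorizations A \<and>
        (\<lambda>r. x r + c r) = (\<lambda>r. a r + ca r) \<and> (\<lambda>r. y r + c r) = (\<lambda>r. b r + ca r)"
    apply (rule exI[of _ a], rule exI[of _ b], rule exI[of _ "\<lambda>r. c' r + c r"])
    using h by (auto simp: factorizations_def)
qed

lemma steps_transl: "(step A \<rho>)\<^sup>*\<^sup>* x y \<Longrightarrow> c \<in> factorizations A \<Longrightarrow>
    (step A \<rho>)\<^sup>*\<^sup>* (\<lambda>r. x r + c r) (\<lambda>r. y r + c r)"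
  by (induction rule: rtranclp_induct) (auto intro: rtranclp.rtrancl_into_rtrancl step_transl)

lemma cong_gen_steps: "(x, y) \<in> cong_gen A \<rho> \<Longrightarrow> (step A \<rho>)\<^sup>*\<^sup>* x y"
proof (induction rule: cong_gen.induct)
  case (base a b)
  have "step A \<rho> a b"
    unfolding step_def
    by (rule exI[of _ a], rule exI[of _ b], rule exI[of _ "\<lambda>r. 0"])
       (use base in \<open>auto simp: factorizations_def\<close>)
  then show ?case by auto
next
  case (refl a) then show ?case by auto
next
  case (sym a b) then show ?case using steps_sym by metis
next
  case (trans a b c) then show ?case by auto
next
  case (transl a b c) then show ?case using steps_transl by blast
qed

lemma cross: "R\<^sup>*\<^sup>* x y \<Longrightarrow> P x \<Longrightarrow> \<not> P y \<Longrightarrow> \<exists>z z'. P z \<and> \<not> P z' \<and> R z z'"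
  by (induction rule: rtranclp_induct) auto

lemma sub_add: "sub (\<lambda>r. a r + c r) B \<longleftrightarrow> sub a B \<and> sub c B"
  unfolding sub_def by auto

lemma exit_rel:
  assumes fin: "finite A" and pos: "0 \<notin> A"
    and pres: "is_presentation A \<rho>"
    and B: "B \<subseteq> A" "l0 \<in> B" "k0 \<in> A" "k0 \<notin> B"
  shows "\<exists>a b. ((a, b) \<in> \<rho> \<or> (b, a) \<in> \<rho>) \<and> sub a B \<and> \<not> sub b B \<and> (\<exists>k. a k \<noteq> 0)"
proof -
  define x0 where "x0 = (\<lambda>r. if r = l0 then k0 else 0)"
  define y0 where "y0 = (\<lambda>r. if r = k0 then l0 else 0)"
  have f0: "x0 \<in> factorizations A" "y0 \<in> factorizations A"
    using B by (auto simp: factorizations_def x0_def y0_def)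
  have "factor_eval A x0 = k0 * l0" "factor_eval A y0 = l0 * k0"
    unfolding factor_eval_def x0_def y0_def using B fin
    by (auto simp: if_distrib[of "\<lambda>x. x * _"] sum.delta' cong: if_cong)
  then have "(x0, y0) \<in> kernel_congruence A"
    using f0 by (auto simp: kernel_congruence_def)
  then have "(x0, y0) \<in> cong_gen A \<rho>" using pres by (auto simp: is_presentation_def)
  then have st: "(step A \<rho>)\<^sup>*\<^sup>* x0 y0" by (rule cong_gen_steps)
  have "sub x0 B" using B by (auto simp: sub_def x0_def)
  moreover have "\<not> sub y0 B" using B pos by (auto simp: sub_def y0_def) (metis gr0I subsetD)
  ultimately obtain z z' where zz: "sub z B" "\<not> sub z' B" "step A \<rho> z z'"
    using cross[OF st, of "\<lambda>z. sub z B"] by blast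
  then obtain a b c where abc: "(a, b) \<in> \<rho> \<or> (b, a) \<in> \<rho>" "c \<in> factorizations A"
    "z = (\<lambda>r. a r + c r)" "z' = (\<lambda>r. b r + c r)"
    unfolding step_def by blast
  have sa: "sub a B" "sub c B" using zz(1) abc(3) sub_add by auto
  have sb: "\<not> sub b B" using zz(2) abc(4) sa(2) sub_add by auto
  have rk: "\<rho> \<subseteq> kernel_congruence A" using pres by (auto simp: is_presentation_def)
  have kab: "a \<in> factorizations A" "b \<in> factorizations A" "factor_eval A a = factor_eval A b"
    using abc(1) rk by (auto simp: kernel_congruence_def)
  have "\<exists>k. a k \<noteq> 0"
  proof (rule ccontr)
    assume "\<not> (\<exists>k. a k \<noteq> 0)"
    then have "factor_eval A a = 0" by (simp add: factor_eval_def)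
    then have "(\<Sum>r\<in>A. b r * r) = 0" using kab by (simp add: factor_eval_def)
    then have "\<forall>r\<in>A. b r * r = 0" using fin by simp
    then have "\<forall>r\<in>A. b r = 0" using pos by fastforce
    then have "sub b B" using kab(2) by (auto simp: sub_def factorizations_def)
    then show False using sb by simp
  qed
  then show ?thesis using abc(1) sa sb by blast
qed



interpretation FV: vector_space "(\<lambda>c (f::nat\<Rightarrow>real) x. c * f x)"
  by unfold_locales (auto simp: algebra_simps fun_eq_iff)

definition vec :: "((nat\<Rightarrow>nat)\<times>(nat\<Rightarrow>nat)) \<Rightarrow> nat \<Rightarrow> real" where
  "vec \<sigma> = (\<lambda>k. real (fst \<sigma> k) - real (snd \<sigma> k))"

definition E :: "nat \<Rightarrow> nat \<Rightarrow> nat \<Rightarrow> real" where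
  "E k0 k = (\<lambda>j. (if j = k then real k0 else 0) - (if j = k0 then real k else 0))"

lemma spanE:
  assumes fin: "finite C" and k0: "k0 \<in> C" "0 < k0"
    and u0: "\<forall>j. j \<notin> C \<longrightarrow> u j = 0" and us: "(\<Sum>j\<in>C. u j * real j) = 0"
  shows "u \<in> FV.span (E k0 ` (C - {k0}))"
proof -
  define w where "w = (\<Sum>k\<in>C - {k0}. (\<lambda>x. (u k / real k0) * E k0 k x))"
  have "w \<in> FV.span (E k0 ` (C - {k0}))"
    unfolding w_def by (intro FV.span_sum FV.span_scale FV.span_base) auto
  moreover have "w = u"
  proof
    fix j
    have wj: "w j = (\<Sum>k\<in>C - {k0}. (u k / real k0) * E k0 k j)"
      unfolding w_def sum_app by simp
    show "w j = u j"
    proof (cases "j = k0")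
      case True
      have "w j = (\<Sum>k\<in>C - {k0}. - (u k * real k) / real k0)"
        using True unfolding wj by (intro sum.cong) (auto simp: E_def)
      also have "\<dots> = - (\<Sum>k\<in>C - {k0}. u k * real k) / real k0"
        by (simp add: sum_divide_distrib sum_negf)
      also have "(\<Sum>k\<in>C - {k0}. u k * real k) = - (u k0 * real k0)"
        using us fin k0 by (simp add: sum.remove)
      finally show ?thesis using True k0 by simp
    next
      case False
      have "w j = (\<Sum>k\<in>C - {k0}. (if k = j then u k else 0))"
        unfolding wj using False k0 by (intro sum.cong) (auto simp: E_def)
      also have "\<dots> = (if j \<in> C - {k0} then u j else 0)"
        using fin by (simp add: sum.delta)
      also have "\<dots> = u j" using u0 False by auto
      finally show ?thesis .
    qed
  qed
  ultimately show ?thesis by simp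
qed

lemma injE:
  assumes "0 < k0" shows "inj_on (E k0) (UNIV - {k0})"
proof
  fix k k' assume h: "k \<in> UNIV - {k0}" "k' \<in> UNIV - {k0}" "E k0 k = E k0 k'"
  then have "E k0 k k = E k0 k' k" by simp
  then show "k = k'" using h assms by (auto simp: E_def split: if_splits)
qed

lemma indepE:
  assumes fin: "finite C" and k0: "0 < k0"
  shows "FV.independent (E k0 ` (C - {k0}))" "card (E k0 ` (C - {k0})) = card (C - {k0})"
proof -
  have inj: "inj_on (E k0) (C - {k0})" using injE[OF k0] by (rule inj_on_subset) auto
  show "card (E k0 ` (C - {k0})) = card (C - {k0})" using inj by (simp add: card_image)
  show "FV.independent (E k0 ` (C - {k0}))"
    unfolding FV.independent_explicit_module
  proof (intro allI impI)
    fix t u v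
    assume h: "finite t" "t \<subseteq> E k0 ` (C - {k0})" "(\<Sum>v\<in>t. (\<lambda>x. u v * v x)) = 0" "v \<in> t"
    then obtain j where j: "j \<in> C - {k0}" "v = E k0 j" by auto
    have ev: "w j = (if w = E k0 j then real k0 else 0)" if wt: "w \<in> t" for w
    proof -
      obtain k where k: "k \<in> C - {k0}" "w = E k0 k" using wt h(2) by blast
      have "(w = E k0 j) = (k = j)" using inj k j by (auto dest: inj_onD)
      then show ?thesis using k j by (auto simp: E_def)
    qed
    have "0 = (\<Sum>v\<in>t. (\<lambda>x. u v * v x)) j" using h by simp
    also have "\<dots> = (\<Sum>w\<in>t. u w * w j)" unfolding sum_app by simp
    also have "\<dots> = (\<Sum>w\<in>t. if w = E k0 j then u w * real k0 else 0)"
    proof (rule sum.cong[OF HOL.refl])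
      fix w assume "w \<in> t" then show "u w * w j = (if w = E k0 j then u w * real k0 else 0)"
        using ev[of w] by simp
    qed
    also have "\<dots> = u v * real k0" using h j by (simp add: sum.delta')
    finally show "u v = 0" using k0 by simp
  qed
qed

lemma cong_vec:
  assumes "(x, y) \<in> cong_gen A \<rho>" "finite \<rho>"
  shows "\<exists>c::_ \<Rightarrow> int. \<forall>k. real (x k) - real (y k) = (\<Sum>\<sigma>\<in>\<rho>. real_of_int (c \<sigma>) * vec \<sigma> k)"
  using assms
proof (induction rule: cong_gen.induct)
  case (base a b)
  show ?case
    apply (rule exI[of _ "\<lambda>\<sigma>. if \<sigma> = (a, b) then 1 else 0"])
    using base by (auto simp: if_distrib[of "real_of_int"] if_distrib[of "\<lambda>x. x * _"] sum.delta' vec_def cong: if_cong)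
next
  case (refl a) then show ?case by (intro exI[of _ "\<lambda>_. 0"]) simp
next
  case (sym a b)
  then obtain c where c: "\<forall>k. real (a k) - real (b k) = (\<Sum>\<sigma>\<in>\<rho>. real_of_int (c \<sigma>) * vec \<sigma> k)" by blast
  show ?case
  proof (intro exI[of _ "\<lambda>\<sigma>. - c \<sigma>"] allI)
    fix k
    have "real (b k) - real (a k) = - (real (a k) - real (b k))" by simp
    also have "\<dots> = - (\<Sum>\<sigma>\<in>\<rho>. real_of_int (c \<sigma>) * vec \<sigma> k)" using c by simp
    finally show "real (b k) - real (a k) = (\<Sum>\<sigma>\<in>\<rho>. real_of_int (- c \<sigma>) * vec \<sigma> k)"
      by (simp add: sum_negf)
  qed
next
  case (trans a b d)
  then obtain c1 c2 where "\<forall>k. real (a k) - real (b k) = (\<Sum>\<sigma>\<in>\<rho>. real_of_int (c1 \<sigma>) * vec \<sigma> k)"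
    "\<forall>k. real (b k) - real (d k) = (\<Sum>\<sigma>\<in>\<rho>. real_of_int (c2 \<sigma>) * vec \<sigma> k)" by blast
  then show ?case
    by (intro exI[of _ "\<lambda>\<sigma>. c1 \<sigma> + c2 \<sigma>"]) (simp add: sum.distrib distrib_right, smt (verit))
next
  case (transl a b c)
  then show ?case by simp
qed

lemma int_vec:
  assumes pres: "is_presentation A \<rho>" and fr: "finite \<rho>" and fin: "finite A"
    and v0: "\<forall>k. k \<notin> A \<longrightarrow> v k = 0" and vs: "(\<Sum>k\<in>A. v k * int k) = 0"
  shows "\<exists>c::_ \<Rightarrow> int. \<forall>k. real_of_int (v k) = (\<Sum>\<sigma>\<in>\<rho>. real_of_int (c \<sigma>) * vec \<sigma> k)"
proof -
  define x where "x = (\<lambda>k. nat (v k))"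
  define y where "y = (\<lambda>k. nat (- v k))"
  have xy: "\<And>k. int (x k) - int (y k) = v k" by (simp add: x_def y_def)
  have fxy: "x \<in> factorizations A" "y \<in> factorizations A"
    using v0 by (auto simp: factorizations_def x_def y_def)
  have "int (factor_eval A x) - int (factor_eval A y) = (\<Sum>k\<in>A. (int (x k) - int (y k)) * int k)"
    by (simp add: factor_eval_def sum_subtractf left_diff_distrib)
  also have "\<dots> = 0" using vs xy by simp
  finally have "factor_eval A x = factor_eval A y" by simp
  then have "(x, y) \<in> cong_gen A \<rho>"
    using pres fxy by (auto simp: is_presentation_def kernel_congruence_def)
  then obtain c where c: "\<forall>k. real (x k) - real (y k) = (\<Sum>\<sigma>\<in>\<rho>. real_of_int (c \<sigma>) * vec \<sigma> k)"
    using cong_vec fr by blast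
  have "\<And>k. real_of_int (v k) = real (x k) - real (y k)"
    using xy by (metis of_int_diff of_int_of_nat_eq)
  then show ?thesis using c by auto
qed



lemma indep_rho:
  assumes pres: "is_presentation A \<rho>" and fr: "finite \<rho>" and fin: "finite A"
    and pos: "0 \<notin> A" and cr: "card \<rho> + 1 = card A"
  shows "FV.independent (vec ` \<rho>) \<and> inj_on vec \<rho>"
proof -
  have "A \<noteq> {}" using cr by auto
  then obtain k0 where k0: "k0 \<in> A" by auto
  have k0p: "0 < k0" using k0 pos by (cases k0) auto
  define W where "W = E k0 ` (A - {k0})"
  have iW: "FV.independent W" "card W = card (A - {k0})"
    using indepE[OF fin k0p] unfolding W_def by auto
  have cW: "card W = card \<rho>" using iW(2) k0 fin cr by simp
  have WS: "W \<subseteq> FV.span (vec ` \<rho>)"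
  proof
    fix x assume "x \<in> W"
    then obtain k where k: "k \<in> A - {k0}" "x = E k0 k" unfolding W_def by auto
    define v where "v = (\<lambda>j. (if j = k then int k0 else 0) - (if j = k0 then int k else 0))"
    have v0: "\<forall>j. j \<notin> A \<longrightarrow> v j = 0" using k k0 by (auto simp: v_def)
    have "(\<Sum>j\<in>A. v j * int j) = (\<Sum>j\<in>A. (if j = k then int k0 * int k else 0))
        - (\<Sum>j\<in>A. (if j = k0 then int k * int k0 else 0))"
      unfolding v_def by (simp add: sum_subtractf[symmetric] left_diff_distrib if_distrib[of "\<lambda>x. x * _"] cong: if_cong)
    also have "\<dots> = 0" using k k0 fin by (simp add: sum.delta')
    finally have vs: "(\<Sum>j\<in>A. v j * int j) = 0" .
    obtain c where c: "\<forall>j. real_of_int (v j) = (\<Sum>\<sigma>\<in>\<rho>. real_of_int (c \<sigma>) * vec \<sigma> j)"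
      using int_vec[OF pres fr fin v0 vs] by blast
    have "x = (\<Sum>\<sigma>\<in>\<rho>. (\<lambda>j. real_of_int (c \<sigma>) * vec \<sigma> j))"
    proof
      fix j
      have "x j = real_of_int (v j)" using k by (simp add: E_def v_def)
      then show "x j = (\<Sum>\<sigma>\<in>\<rho>. (\<lambda>j. real_of_int (c \<sigma>) * vec \<sigma> j)) j"
        using c by (simp add: sum_app)
    qed
    also have "\<dots> \<in> FV.span (vec ` \<rho>)"
      by (intro FV.span_sum FV.span_scale FV.span_base) auto
    finally show "x \<in> FV.span (vec ` \<rho>)" .
  qed
  obtain Bm where Bm: "Bm \<subseteq> vec ` \<rho>" "FV.independent Bm" "vec ` \<rho> \<subseteq> FV.span Bm"
    using FV.maximal_independent_subset[of "vec ` \<rho>"] by blast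
  have "FV.span (vec ` \<rho>) \<subseteq> FV.span Bm"
    using Bm(3) by (intro FV.span_minimal) auto
  then have "W \<subseteq> FV.span Bm" using WS by auto
  moreover have fBm: "finite Bm" using Bm(1) fr finite_surj by blast
  ultimately have "card W \<le> card Bm" using FV.independent_span_bound[OF fBm iW(1)] by auto
  moreover have "card Bm \<le> card (vec ` \<rho>)" using Bm(1) fr by (simp add: card_mono)
  moreover have "card (vec ` \<rho>) \<le> card \<rho>" using fr card_image_le by blast
  ultimately have e1: "card Bm = card (vec ` \<rho>)" "card (vec ` \<rho>) = card \<rho>" using cW by auto
  have "Bm = vec ` \<rho>" using card_subset_eq[OF _ Bm(1) e1(1)] fr by auto
  then show ?thesis using Bm(2) e1(2) fr by (simp add: eq_card_imp_inj_on)
qed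

lemma vec_sum_sub:
  assumes fin: "finite A" and C: "C \<subseteq> A" and s: "sub (fst \<sigma>) C" "sub (snd \<sigma>) C"
    and k: "factor_eval A (fst \<sigma>) = factor_eval A (snd \<sigma>)"
  shows "(\<Sum>j\<in>C. vec \<sigma> j * real j) = 0"
proof -
  have "(\<Sum>j\<in>C. vec \<sigma> j * real j) = real (\<Sum>j\<in>C. fst \<sigma> j * j) - real (\<Sum>j\<in>C. snd \<sigma> j * j)"
    by (simp add: vec_def sum_subtractf left_diff_distrib)
  also have "\<dots> = 0" using k phi_sub[OF fin C s(1)] phi_sub[OF fin C s(2)] by simp
  finally show ?thesis .
qed

lemma span_block:
  assumes fin: "finite A" and pos: "0 \<notin> A" and rk: "\<rho> \<subseteq> kernel_congruence A" and fr: "finite \<rho>"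
    and ind: "FV.independent (vec ` \<rho>)" "inj_on vec \<rho>"
    and C: "C \<subseteq> A" "C \<noteq> {}"
    and RB: "RB \<subseteq> \<rho>" "card RB + 1 = card C" "\<forall>\<sigma>\<in>RB. sub (fst \<sigma>) C \<and> sub (snd \<sigma>) C"
    and w0: "\<forall>j. j \<notin> C \<longrightarrow> w j = 0" and ws: "(\<Sum>j\<in>C. w j * real j) = 0"
  shows "w \<in> FV.span (vec ` RB)"
proof (rule ccontr)
  assume nw: "w \<notin> FV.span (vec ` RB)"
  obtain k0 where k0: "k0 \<in> C" using C by auto
  have k0p: "0 < k0" using k0 C pos by (cases k0) auto
  have fC: "finite C" using C fin finite_subset by blast
  define W where "W = E k0 ` (C - {k0})"
  have iW: "card W = card (C - {k0})" using indepE[OF fC k0p] unfolding W_def by auto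
  have fW: "finite W" unfolding W_def using fC by simp
  have "vec ` RB \<subseteq> FV.span W"
  proof
    fix x assume "x \<in> vec ` RB"
    then obtain \<sigma> where s: "\<sigma> \<in> RB" "x = vec \<sigma>" by auto
    have "factor_eval A (fst \<sigma>) = factor_eval A (snd \<sigma>)"
      using s RB rk by (auto simp: kernel_congruence_def)
    then have "(\<Sum>j\<in>C. vec \<sigma> j * real j) = 0" using vec_sum_sub[OF fin C(1)] RB s by auto
    moreover have "\<forall>j. j \<notin> C \<longrightarrow> vec \<sigma> j = 0" using RB s by (auto simp: vec_def sub_def)
    ultimately show "x \<in> FV.span W" using spanE[OF fC k0 k0p] s unfolding W_def by blast
  qed
  moreover have "w \<in> FV.span W" using spanE[OF fC k0 k0p w0 ws] unfolding W_def by blast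
  ultimately have sub1: "insert w (vec ` RB) \<subseteq> FV.span W" by auto
  have "FV.independent (vec ` RB)" using FV.independent_mono[OF ind(1) image_mono[OF RB(1)]] .
  then have "FV.independent (insert w (vec ` RB))" using nw FV.independent_insertI by blast
  then have "card (insert w (vec ` RB)) \<le> card W"
    using FV.independent_span_bound[OF fW _ sub1] by auto
  moreover have "w \<notin> vec ` RB" using nw FV.span_base by blast
  moreover have "card (vec ` RB) = card RB" using inj_on_subset[OF ind(2) RB(1)] by (simp add: card_image)
  moreover have "finite RB" using RB(1) fr finite_subset by blast
  ultimately have "card RB + 1 \<le> card (C - {k0})" using iW by simp
  then show False using RB(2) k0 fC by simp
qed



lemma bezout_set:
  assumes "finite C"
  shows "\<exists>q::nat\<Rightarrow>int. (\<forall>k. k \<notin> C \<longrightarrow> q k = 0) \<and> (\<Sum>k\<in>C. q k * int k) = int (Gcd C)"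
  using assms
proof (induction rule: finite_induct)
  case empty then show ?case by (intro exI[of _ "\<lambda>_. 0"]) simp
next
  case (insert x F)
  then obtain q where q: "\<forall>k. k \<notin> F \<longrightarrow> q k = 0" "(\<Sum>k\<in>F. q k * int k) = int (Gcd F)" by blast
  obtain u v where uv: "u * int x + v * int (Gcd F) = gcd (int x) (int (Gcd F))"
    using bezout_int by blast
  define q' where "q' k = (if k = x then u else 0) + v * q k" for k
  have "(\<Sum>k\<in>insert x F. q' k * int k) = q' x * int x + (\<Sum>k\<in>F. q' k * int k)"
    using insert by simp
  also have "(\<Sum>k\<in>F. q' k * int k) = v * (\<Sum>k\<in>F. q k * int k)"
    unfolding q'_def using insert by (auto simp: sum_distrib_left intro!: sum.cong)
  also have "q' x = u" using q insert by (simp add: q'_def)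
  finally have "(\<Sum>k\<in>insert x F. q' k * int k) = int (Gcd (insert x F))"
    using uv q by simp
  moreover have "\<forall>k. k \<notin> insert x F \<longrightarrow> q' k = 0" using q by (simp add: q'_def)
  ultimately show ?case by blast
qed

lemma core:
  assumes fin: "finite A" and pos: "0 \<notin> A" and pres: "is_presentation A \<rho>" and fr: "finite \<rho>"
    and cr: "card \<rho> + 1 = card A"
    and B: "B1 \<subseteq> A" "B2 \<subseteq> A" "B1 \<inter> B2 = {}" "B1 \<noteq> {}" "B2 \<noteq> {}"
    and RB: "RB \<subseteq> \<rho>" "card RB + 1 = card (B1 \<union> B2)" "(a, b) \<in> RB"
    and ab: "sub a B1" "sub b B2"
    and oth: "\<forall>\<sigma>\<in>RB - {(a, b)}. (sub (fst \<sigma>) B1 \<and> sub (snd \<sigma>) B1) \<or> (sub (fst \<sigma>) B2 \<and> sub (snd \<sigma>) B2)"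
  shows "factor_eval A a dvd lcm (Gcd B1) (Gcd B2)"
proof -
  have rk: "\<rho> \<subseteq> kernel_congruence A" using pres by (auto simp: is_presentation_def)
  have ind: "FV.independent (vec ` \<rho>)" "inj_on vec \<rho>" using indep_rho[OF pres fr fin pos cr] by auto
  have fB: "finite B1" "finite B2" using B(1,2) fin finite_subset by blast+
  define g1 where "g1 = Gcd B1"
  define g2 where "g2 = Gcd B2"
  define l where "l = lcm g1 g2"
  define n where "n = factor_eval A a"
  obtain m1 where m1: "l = g1 * m1" unfolding l_def by (meson dvd_lcm1 dvdE)
  obtain m2 where m2: "l = g2 * m2" unfolding l_def by (meson dvd_lcm2 dvdE)
  obtain q1 where q1: "\<forall>k. k \<notin> B1 \<longrightarrow> q1 k = 0" "(\<Sum>k\<in>B1. q1 k * int k) = int g1"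
    using bezout_set[OF fB(1)] unfolding g1_def by blast
  obtain q2 where q2: "\<forall>k. k \<notin> B2 \<longrightarrow> q2 k = 0" "(\<Sum>k\<in>B2. q2 k * int k) = int g2"
    using bezout_set[OF fB(2)] unfolding g2_def by blast
  define p1 where "p1 k = int m1 * q1 k" for k
  define p2 where "p2 k = int m2 * q2 k" for k
  define v where "v k = p1 k - p2 k" for k
  have sp1: "(\<Sum>k\<in>B1. p1 k * int k) = int l"
    using q1 m1 by (simp add: p1_def sum_distrib_left[symmetric] mult.assoc)
  have sp2: "(\<Sum>k\<in>B2. p2 k * int k) = int l"
    using q2 m2 by (simp add: p2_def sum_distrib_left[symmetric] mult.assoc)
  have p1z: "\<forall>k. k \<notin> B1 \<longrightarrow> p1 k = 0" using q1 by (simp add: p1_def)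
  have p2z: "\<forall>k. k \<notin> B2 \<longrightarrow> p2 k = 0" using q2 by (simp add: p2_def)
  have v0: "\<forall>k. k \<notin> A \<longrightarrow> v k = 0"
  proof (intro allI impI)
    fix k assume "k \<notin> A"
    then have "k \<notin> B1" "k \<notin> B2" using B(1,2) by auto
    then show "v k = 0" using p1z p2z by (simp add: v_def)
  qed
  have sA1: "(\<Sum>k\<in>A. p1 k * int k) = (\<Sum>k\<in>B1. p1 k * int k)"
    using p1z B fin by (intro sum.mono_neutral_right) auto
  have sA2: "(\<Sum>k\<in>A. p2 k * int k) = (\<Sum>k\<in>B2. p2 k * int k)"
    using p2z B fin by (intro sum.mono_neutral_right) auto
  have vs: "(\<Sum>k\<in>A. v k * int k) = 0"
    unfolding v_def using sA1 sA2 sp1 sp2 by (simp add: left_diff_distrib sum_subtractf)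
  obtain c where c: "\<forall>k. real_of_int (v k) = (\<Sum>\<sigma>\<in>\<rho>. real_of_int (c \<sigma>) * vec \<sigma> k)"
    using int_vec[OF pres fr fin v0 vs] by blast
  define w where "w k = real_of_int (v k)" for k
  have fBB: "finite (B1 \<union> B2)" using fB by simp
  have w0: "\<forall>j. j \<notin> B1 \<union> B2 \<longrightarrow> w j = 0" using p1z p2z by (simp add: w_def v_def)
  have "(\<Sum>j\<in>B1 \<union> B2. v j * int j) = (\<Sum>k\<in>A. v k * int k)"
    using B fin w0 by (intro sum.mono_neutral_left) (auto simp: w_def)
  then have "(\<Sum>j\<in>B1 \<union> B2. w j * real j) = 0" using vs unfolding w_def
    by (metis (no_types, lifting) of_int_0 of_int_mult of_int_of_nat_eq of_int_sum sum.cong)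
  then have "w \<in> FV.span (vec ` RB)"
  proof (intro span_block[OF fin pos rk fr ind _ _ RB(1,2) _ w0])
    show "B1 \<union> B2 \<subseteq> A" "B1 \<union> B2 \<noteq> {}" using B by auto
    show "\<forall>\<sigma>\<in>RB. sub (fst \<sigma>) (B1 \<union> B2) \<and> sub (snd \<sigma>) (B1 \<union> B2)"
      using oth ab by (auto simp: sub_def)
  qed
  then obtain u where u: "w = (\<Sum>x\<in>vec ` RB. (\<lambda>j. u x * x j))"
    using FV.span_finite[of "vec ` RB"] RB(1) fr finite_subset by blast
  have injRB: "inj_on vec RB" using inj_on_subset[OF ind(2) RB(1)] .
  define d where "d \<sigma> = real_of_int (c \<sigma>) - (if \<sigma> \<in> RB then u (vec \<sigma>) else 0)" for \<sigma>
  have dz: "(\<Sum>x\<in>vec ` \<rho>. (\<lambda>j. d (inv_into \<rho> vec x) * x j)) = 0"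
  proof
    fix j
    have "(\<Sum>x\<in>vec ` \<rho>. (\<lambda>j. d (inv_into \<rho> vec x) * x j)) j
        = (\<Sum>\<sigma>\<in>\<rho>. d \<sigma> * vec \<sigma> j)"
      unfolding sum_app using ind(2) by (simp add: sum.reindex)
    also have "\<dots> = (\<Sum>\<sigma>\<in>\<rho>. real_of_int (c \<sigma>) * vec \<sigma> j)
        - (\<Sum>\<sigma>\<in>\<rho>. if \<sigma> \<in> RB then u (vec \<sigma>) * vec \<sigma> j else 0)"
      unfolding d_def by (simp add: left_diff_distrib sum_subtractf if_distrib[of "\<lambda>x. x * _"] cong: if_cong)
    also have "(\<Sum>\<sigma>\<in>\<rho>. if \<sigma> \<in> RB then u (vec \<sigma>) * vec \<sigma> j else 0)
        = (\<Sum>\<sigma>\<in>RB. u (vec \<sigma>) * vec \<sigma> j)"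
      using RB(1) fr by (simp add: sum.inter_restrict[symmetric] Int_absorb1)
    also have "\<dots> = (\<Sum>x\<in>vec ` RB. u x * x j)" using injRB by (simp add: sum.reindex)
    also have "\<dots> = w j" using u by (simp add: sum_app)
    finally show "(\<Sum>x\<in>vec ` \<rho>. (\<lambda>j. d (inv_into \<rho> vec x) * x j)) j = 0 j"
      using c by (simp add: w_def)
  qed
  have c0: "c \<sigma> = 0" if "\<sigma> \<in> \<rho>" "\<sigma> \<notin> RB" for \<sigma>
  proof -
    have "d (inv_into \<rho> vec (vec \<sigma>)) = 0"
      using FV.independentD[OF ind(1) finite_imageI[OF fr] order_refl dz] that by auto
    then show ?thesis using that ind(2) by (simp add: d_def)
  qed
  define T where "T \<sigma> = (\<Sum>k\<in>B1. vec \<sigma> k * real k)" for \<sigma>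
  have "real l = (\<Sum>k\<in>B1. w k * real k)"
  proof -
    have "(\<Sum>k\<in>B1. v k * int k) = (\<Sum>k\<in>B1. p1 k * int k)"
      using p2z B(3) by (intro sum.cong) (auto simp: v_def)
    then have "(\<Sum>k\<in>B1. v k * int k) = int l" using sp1 by simp
    then show ?thesis unfolding w_def
      by (metis (no_types, lifting) of_int_mult of_int_of_nat_eq of_int_sum sum.cong)
  qed
  also have "\<dots> = (\<Sum>k\<in>B1. \<Sum>\<sigma>\<in>\<rho>. real_of_int (c \<sigma>) * vec \<sigma> k * real k)"
    using c by (simp add: w_def sum_distrib_right)
  also have "\<dots> = (\<Sum>\<sigma>\<in>\<rho>. real_of_int (c \<sigma>) * T \<sigma>)"
    unfolding T_def by (subst sum.swap) (simp add: sum_distrib_left mult.assoc)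
  also have "\<dots> = (\<Sum>\<sigma>\<in>\<rho>. if \<sigma> = (a, b) then real_of_int (c (a, b)) * real n else 0)"
  proof (rule sum.cong[OF HOL.refl])
    fix \<sigma> assume s: "\<sigma> \<in> \<rho>"
    have kern: "factor_eval A (fst \<sigma>) = factor_eval A (snd \<sigma>)"
      using s rk by (auto simp: kernel_congruence_def)
    show "real_of_int (c \<sigma>) * T \<sigma> = (if \<sigma> = (a, b) then real_of_int (c (a, b)) * real n else 0)"
    proof (cases "\<sigma> = (a, b)")
      case True
      have "T \<sigma> = real (\<Sum>k\<in>B1. a k * k) - real (\<Sum>k\<in>B1. b k * k)"
        using True by (simp add: T_def vec_def sum_subtractf left_diff_distrib)
      also have "(\<Sum>k\<in>B1. b k * k) = 0" using ab(2) B(3) by (auto simp: sub_def intro!: sum.neutral)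
      also have "(\<Sum>k\<in>B1. a k * k) = n" unfolding n_def using phi_sub[OF fin B(1) ab(1)] by simp
      finally show ?thesis using True by simp
    next
      case False
      show ?thesis
      proof (cases "\<sigma> \<in> RB")
        case False2: False
        then show ?thesis using c0 s False by simp
      next
        case True
        then have "(sub (fst \<sigma>) B1 \<and> sub (snd \<sigma>) B1) \<or> (sub (fst \<sigma>) B2 \<and> sub (snd \<sigma>) B2)"
          using oth False by auto
        then have "T \<sigma> = 0"
        proof
          assume h: "sub (fst \<sigma>) B1 \<and> sub (snd \<sigma>) B1"
          show "T \<sigma> = 0" unfolding T_def using vec_sum_sub[OF fin B(1)] h kern by auto
        next
          assume h: "sub (fst \<sigma>) B2 \<and> sub (snd \<sigma>) B2"
          have "\<forall>k\<in>B1. vec \<sigma> k = 0"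
          proof
            fix k assume "k \<in> B1" then have "k \<notin> B2" using B(3) by blast
            then show "vec \<sigma> k = 0" using h by (simp add: sub_def vec_def)
          qed
          then show "T \<sigma> = 0" unfolding T_def by simp
        qed
        then show ?thesis using False by simp
      qed
    qed
  qed
  also have "\<dots> = real_of_int (c (a, b)) * real n" using RB fr by (auto simp: sum.delta')
  finally have "real l = real_of_int (c (a, b)) * real n" .
  then have "int l = c (a, b) * int n"
    by (metis of_int_eq_iff of_int_mult of_int_of_nat_eq)
  then have "int n dvd int l" by simp
  then show ?thesis unfolding n_def l_def g1_def g2_def by simp
qed



lemma two_min:
  assumes fC: "finite C" and pos: "0 \<notin> C" and sc: "sub c C" and n: "n = (\<Sum>k\<in>C. c k * k)"
    and np: "0 < n" and nC: "n \<notin> C"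
  shows "\<exists>k\<in>C. 2 * k \<le> n"
proof -
  obtain k where k: "k \<in> C" "c k \<noteq> 0"
  proof (rule ccontr)
    assume "\<not> thesis"
    then have "\<forall>k\<in>C. c k = 0" using that by blast
    then have "n = 0" using n by simp
    then show False using np by simp
  qed
  define R where "R = (\<Sum>j\<in>C - {k}. c j * j)"
  have nR: "n = c k * k + R" using n k fC by (simp add: R_def sum.remove)
  show ?thesis
  proof (cases "c k \<ge> 2")
    case True
    then have "2 * k \<le> c k * k" by simp
    then have "2 * k \<le> n" using nR by (metis le_add1 order_trans)
    then show ?thesis using k(1) by blast
  next
    case False
    then have ck: "c k = 1" using k by simp
    show ?thesis
    proof (cases "R = 0")
      case True
      then have "n = k" using nR ck by simp
      then show ?thesis using nC k by simp
    next
      case False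
      have "\<exists>j\<in>C - {k}. c j * j \<noteq> 0"
      proof (rule ccontr)
        assume "\<not> (\<exists>j\<in>C - {k}. c j * j \<noteq> 0)"
        then have "R = 0" unfolding R_def by (intro sum.neutral) blast
        then show False using False by simp
      qed
      then obtain j where j: "j \<in> C - {k}" "c j * j \<noteq> 0" by blast
      have "c j * j \<le> R" unfolding R_def using fC j by (intro member_le_sum) auto
      moreover have "j \<le> c j * j" using j by simp
      ultimately have "j \<le> R" by linarith
      then have "k + j \<le> n" using nR ck by simp
      show ?thesis
      proof (cases "k \<le> j")
        case True
        then have "2 * k \<le> n" using \<open>k + j \<le> n\<close> by linarith
        then show ?thesis using k(1) by blast
      next
        case False
        then have "2 * j \<le> n" using \<open>k + j \<le> n\<close> by linarith
        then show ?thesis using j(1) by blast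
      qed
    qed
  qed
qed

lemma Gcd_Un_nat: "Gcd (X \<union> Y) = gcd (Gcd X) (Gcd (Y::nat set))"
proof (rule dvd_antisym)
  show "Gcd (X \<union> Y) dvd gcd (Gcd X) (Gcd Y)"
    by (intro gcd_greatest Gcd_greatest) (auto intro: Gcd_dvd)
  show "gcd (Gcd X) (Gcd Y) dvd Gcd (X \<union> Y)"
  proof (rule Gcd_greatest)
    fix a assume "a \<in> X \<union> Y"
    then show "gcd (Gcd X) (Gcd Y) dvd a"
      by (metis Gcd_dvd Un_iff dvd_trans gcd_dvd1 gcd_dvd2)
  qed
qed

definition QB :: "nat set \<Rightarrow> bool" where
  "QB B \<longleftrightarrow> (\<forall>x\<in>B. Gcd B * 2 ^ (card B - 1) \<le> x)"

lemma merge_Q: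
  assumes fin: "finite A" and pos: "0 \<notin> A" and pres: "is_presentation A \<rho>" and fr: "finite \<rho>"
    and cr: "card \<rho> + 1 = card A" and irr: "\<forall>x\<in>A. x \<notin> monoid_gen (A - {x})"
    and B: "B1 \<subseteq> A" "B2 \<subseteq> A" "B1 \<inter> B2 = {}" "B1 \<noteq> {}" "B2 \<noteq> {}"
    and Q: "QB B1" "QB B2"
    and RB: "RB \<subseteq> \<rho>" "card RB + 1 = card (B1 \<union> B2)" "(a, b) \<in> RB"
    and ab: "sub a B1" "sub b B2" "\<exists>k. a k \<noteq> 0"
    and oth: "\<forall>\<sigma>\<in>RB - {(a, b)}. (sub (fst \<sigma>) B1 \<and> sub (snd \<sigma>) B1) \<or> (sub (fst \<sigma>) B2 \<and> sub (snd \<sigma>) B2)"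
  shows "QB (B1 \<union> B2)"
proof -
  have fB: "finite B1" "finite B2" using B(1,2) fin finite_subset by blast+
  have rk: "\<rho> \<subseteq> kernel_congruence A" using pres by (auto simp: is_presentation_def)
  define n where "n = factor_eval A a"
  have nb: "factor_eval A b = n" using RB(1,3) rk by (auto simp: kernel_congruence_def n_def)
  have n1: "n = (\<Sum>k\<in>B1. a k * k)" unfolding n_def using phi_sub[OF fin B(1) ab(1)] .
  have n2: "n = (\<Sum>k\<in>B2. b k * k)" using phi_sub[OF fin B(2) ab(2)] nb by simp
  obtain k where k: "a k \<noteq> 0" using ab(3) by blast
  have kB: "k \<in> B1" using k ab(1) by (auto simp: sub_def)
  have kp: "0 < k" using kB B(1) pos by (cases k) auto
  have "a k * k \<le> n" unfolding n1 using fB kB by (intro member_le_sum) auto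
  then have np: "0 < n" using k kp by (metis less_le_trans mult_pos_pos not_gr0)
  have nB1: "n \<notin> B1"
  proof
    assume h: "n \<in> B1"
    then have "B2 \<subseteq> A - {n}" using B by auto
    then have "n \<in> monoid_gen (A - {n})" unfolding n2 using fB by (intro mg_sum) auto
    then show False using irr h B(1) by auto
  qed
  have nB2: "n \<notin> B2"
  proof
    assume h: "n \<in> B2"
    then have "B1 \<subseteq> A - {n}" using B by auto
    then have "n \<in> monoid_gen (A - {n})" unfolding n1 using fB by (intro mg_sum) auto
    then show False using irr h B(2) by auto
  qed
  have p1: "0 \<notin> B1" "0 \<notin> B2" using pos B by auto
  obtain k1 where k1: "k1 \<in> B1" "2 * k1 \<le> n" using two_min[OF fB(1) p1(1) ab(1) n1 np nB1] by blast
  obtain k2 where k2: "k2 \<in> B2" "2 * k2 \<le> n" using two_min[OF fB(2) p1(2) ab(2) n2 np nB2] by blast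
  define g1 where "g1 = Gcd B1"
  define g2 where "g2 = Gcd B2"
  define g where "g = gcd g1 g2"
  define c1 where "c1 = card B1"
  define c2 where "c2 = card B2"
  have c1p: "c1 \<ge> 1" "c2 \<ge> 1" using B fB by (auto simp: c1_def c2_def Suc_le_eq card_gt_0_iff)
  have g1p: "g1 > 0" unfolding g1_def using kB kp by (metis Gcd_dvd gr0I dvd_0_left_iff)
  have g2p: "g2 > 0" unfolding g2_def using k2(1) p1(2)
    by (metis Gcd_dvd gr0I dvd_0_left_iff)
  have h1: "g1 * 2 ^ c1 \<le> n"
  proof -
    have "g1 * 2 ^ (c1 - 1) \<le> k1" using Q(1) k1 by (simp add: QB_def g1_def c1_def)
    then have "g1 * 2 ^ (c1 - 1) * 2 \<le> n" using k1 by simp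
    moreover have "(2::nat) ^ c1 = 2 ^ (c1 - 1) * 2" using c1p by (cases c1) auto
    ultimately show ?thesis by (simp add: mult.assoc)
  qed
  have h2: "g2 * 2 ^ c2 \<le> n"
  proof -
    have "g2 * 2 ^ (c2 - 1) \<le> k2" using Q(2) k2 by (simp add: QB_def g2_def c2_def)
    then have "g2 * 2 ^ (c2 - 1) * 2 \<le> n" using k2 by simp
    moreover have "(2::nat) ^ c2 = 2 ^ (c2 - 1) * 2" using c1p by (cases c2) auto
    ultimately show ?thesis by (simp add: mult.assoc)
  qed
  have dv: "n dvd lcm g1 g2"
    unfolding n_def g1_def g2_def using core[OF fin pos pres fr cr B RB ab(1,2) oth] .
  have lp: "lcm g1 g2 > 0" using g1p g2p by (simp add: lcm_pos_nat)
  have nl: "n \<le> lcm g1 g2" using dv lp by (simp add: dvd_imp_le)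
  have gl: "g1 * g2 = g * lcm g1 g2" unfolding g_def by (rule prod_gcd_lcm_nat)
  have gp: "g > 0" unfolding g_def using g1p by simp
  have e1: "g * 2 ^ c2 \<le> g1"
  proof -
    have "g * (g2 * 2 ^ c2) \<le> g * lcm g1 g2" using h2 nl by simp
    then have "g2 * (g * 2 ^ c2) \<le> g2 * g1" using gl by (simp add: algebra_simps)
    then show ?thesis using g2p by simp
  qed
  have e2: "g * 2 ^ c1 \<le> g2"
  proof -
    have "g * (g1 * 2 ^ c1) \<le> g * lcm g1 g2" using h1 nl by simp
    then have "g1 * (g * 2 ^ c1) \<le> g1 * g2" using gl by (simp add: algebra_simps)
    then show ?thesis using g1p by simp
  qed
  have cU: "card (B1 \<union> B2) = c1 + c2" using fB B(3) by (simp add: c1_def c2_def card_Un_disjoint)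
  have GU: "Gcd (B1 \<union> B2) = g" by (simp add: Gcd_Un_nat g_def g1_def g2_def)
  show ?thesis unfolding QB_def
  proof
    fix x assume "x \<in> B1 \<union> B2"
    then show "Gcd (B1 \<union> B2) * 2 ^ (card (B1 \<union> B2) - 1) \<le> x"
    proof
      assume x: "x \<in> B1"
      have a1: "g1 * 2 ^ (c1 - 1) \<le> x" using Q(1) x by (simp add: QB_def g1_def c1_def)
      have "c1 + c2 - 1 = c2 + (c1 - 1)" using c1p by simp
      then have "(2::nat) ^ (c1 + c2 - 1) = 2 ^ c2 * 2 ^ (c1 - 1)"
        by (simp only: power_add)
      then have a2: "g * 2 ^ (c1 + c2 - 1) = (g * 2 ^ c2) * 2 ^ (c1 - 1)" by (simp add: mult.assoc)
      have a3: "(g * 2 ^ c2) * 2 ^ (c1 - 1) \<le> g1 * 2 ^ (c1 - 1)" using e1 by simp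
      have "g * 2 ^ (c1 + c2 - 1) \<le> x" using a1 a2 a3 by linarith
      then show ?thesis using cU GU by simp
    next
      assume x: "x \<in> B2"
      have a1: "g2 * 2 ^ (c2 - 1) \<le> x" using Q(2) x by (simp add: QB_def g2_def c2_def)
      have "c1 + c2 - 1 = c1 + (c2 - 1)" using c1p by simp
      then have "(2::nat) ^ (c1 + c2 - 1) = 2 ^ c1 * 2 ^ (c2 - 1)"
        by (simp only: power_add)
      then have a2: "g * 2 ^ (c1 + c2 - 1) = (g * 2 ^ c1) * 2 ^ (c2 - 1)" by (simp add: mult.assoc)
      have a3: "(g * 2 ^ c1) * 2 ^ (c2 - 1) \<le> g2 * 2 ^ (c2 - 1)" using e2 by simp
      have "g * 2 ^ (c1 + c2 - 1) \<le> x" using a1 a2 a3 by linarith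
      then show ?thesis using cU GU by simp
    qed
  qed
qed



definition inv :: "nat set \<Rightarrow> ((nat \<Rightarrow> nat) \<times> (nat \<Rightarrow> nat)) set \<Rightarrow> nat set set
    \<Rightarrow> (nat set \<Rightarrow> ((nat \<Rightarrow> nat) \<times> (nat \<Rightarrow> nat)) set) \<Rightarrow> bool" where
  "inv A \<rho> P R \<longleftrightarrow> finite P \<and> (\<forall>B\<in>P. B \<noteq> {} \<and> B \<subseteq> A) \<and> \<Union>P = A \<and>
    (\<forall>B\<in>P. \<forall>B'\<in>P. B \<noteq> B' \<longrightarrow> B \<inter> B' = {}) \<and>
    (\<forall>B\<in>P. R B \<subseteq> \<rho> \<and> card (R B) + 1 = card B \<and> (\<forall>\<sigma>\<in>R B. sub (fst \<sigma>) B \<and> sub (snd \<sigma>) B) \<and> QB B) \<and>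
    (\<forall>B\<in>P. \<forall>B'\<in>P. B \<noteq> B' \<longrightarrow> R B \<inter> R B' = {})"

lemma sub_mono: "sub x X \<Longrightarrow> X \<subseteq> Z \<Longrightarrow> sub x Z"
  unfolding sub_def by auto

lemma inv_step:
  assumes fin: "finite A" and pos: "0 \<notin> A" and pres: "is_presentation A \<rho>" and fr: "finite \<rho>"
    and cr: "card \<rho> + 1 = card A" and irr: "\<forall>x\<in>A. x \<notin> monoid_gen (A - {x})"
    and I: "inv A \<rho> P R" and P2: "2 \<le> card P"
  shows "\<exists>P' R'. inv A \<rho> P' R' \<and> card P' < card P"
proof -
  have fP: "finite P" and Pne: "\<forall>B\<in>P. B \<noteq> {} \<and> B \<subseteq> A" and PU: "\<Union>P = A"
    and Pd: "\<forall>B\<in>P. \<forall>B'\<in>P. B \<noteq> B' \<longrightarrow> B \<inter> B' = {}"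
    and PR: "\<forall>B\<in>P. R B \<subseteq> \<rho> \<and> card (R B) + 1 = card B \<and> (\<forall>\<sigma>\<in>R B. sub (fst \<sigma>) B \<and> sub (snd \<sigma>) B) \<and> QB B"
    and Rd: "\<forall>B\<in>P. \<forall>B'\<in>P. B \<noteq> B' \<longrightarrow> R B \<inter> R B' = {}"
    using I unfolding inv_def by auto
  define U where "U = \<Union>(R ` P)"
  have fR: "\<forall>B\<in>P. finite (R B)" using PR fr finite_subset by blast
  have cU: "card U = (\<Sum>B\<in>P. card (R B))" unfolding U_def using card_UN_disjoint[OF fP fR Rd] .
  have fBs: "\<And>B. B \<in> P \<Longrightarrow> finite B" using Pne fin finite_subset by blast
  have "card A = (\<Sum>B\<in>P. card B)"
    unfolding PU[symmetric] using Pd fBs by (intro card_Union_disjoint) (auto simp: pairwise_def disjnt_def)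
  also have "\<dots> = (\<Sum>B\<in>P. card (R B) + 1)" using PR by (intro sum.cong) auto
  also have "\<dots> = (\<Sum>B\<in>P. card (R B)) + (\<Sum>B\<in>P. 1)" by (rule sum.distrib)
  also have "\<dots> = card U + card P" using cU by simp
  finally have cA: "card A = card U + card P" .
  have Usub: "U \<subseteq> \<rho>" unfolding U_def using PR by auto
  have cD: "card (\<rho> - U) + 1 = card P"
    using card_Diff_subset[OF finite_subset[OF Usub fr] Usub] card_mono[OF fr Usub] cA cr by simp
  define ex where "ex B \<sigma> \<longleftrightarrow> \<sigma> \<in> \<rho> - U \<and>
     ((sub (fst \<sigma>) B \<and> (\<exists>k. fst \<sigma> k \<noteq> 0) \<and> \<not> sub (snd \<sigma>) B) \<or>
      (sub (snd \<sigma>) B \<and> (\<exists>k. snd \<sigma> k \<noteq> 0) \<and> \<not> sub (fst \<sigma>) B))" for B \<sigma>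
  have exE: "\<exists>\<sigma>. ex B \<sigma>" if BP: "B \<in> P" for B
  proof -
    obtain l0 where l0: "l0 \<in> B" using Pne BP by blast
    have "\<exists>B'\<in>P. B' \<noteq> B"
    proof (rule ccontr)
      assume "\<not> (\<exists>B'\<in>P. B' \<noteq> B)"
      then have "P \<subseteq> {B}" by auto
      then have "card P \<le> 1" using card_mono[of "{B}" P] by simp
      then show False using P2 by simp
    qed
    then obtain B' where B': "B' \<in> P" "B' \<noteq> B" by blast
    obtain k0 where k0: "k0 \<in> B'" using Pne B' by blast
    have k0A: "k0 \<in> A" "k0 \<notin> B" using k0 B' Pd BP Pne by blast+
    obtain a b where ab: "(a, b) \<in> \<rho> \<or> (b, a) \<in> \<rho>" "sub a B" "\<not> sub b B" "\<exists>k. a k \<noteq> 0"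
      using exit_rel[OF fin pos pres _ l0 k0A] Pne BP by blast
    have notU: "\<sigma> \<notin> U" if s: "\<sigma> = (a, b) \<or> \<sigma> = (b, a)" for \<sigma>
    proof
      assume "\<sigma> \<in> U"
      then obtain B'' where B'': "B'' \<in> P" "\<sigma> \<in> R B''" unfolding U_def by blast
      then have "sub (fst \<sigma>) B''" "sub (snd \<sigma>) B''" using PR by blast+
      then have "sub a B''" "sub b B''" using s by auto
      obtain k where k: "a k \<noteq> 0" using ab(4) by blast
      then have "k \<in> B" "k \<in> B''" using ab(2) \<open>sub a B''\<close> by (auto simp: sub_def)
      then have "B'' = B" using Pd B'' BP by blast
      then show False using \<open>sub b B''\<close> ab(3) by simp
    qed
    show ?thesis
    proof (cases "(a, b) \<in> \<rho>")
      case True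
      then have "ex B (a, b)" using ab notU by (auto simp: ex_def)
      then show ?thesis by blast
    next
      case False
      then have "(b, a) \<in> \<rho>" using ab by blast
      then have "ex B (b, a)" using ab notU by (auto simp: ex_def)
      then show ?thesis by blast
    qed
  qed
  define f where "f B = (SOME \<sigma>. ex B \<sigma>)" for B
  have fex: "ex B (f B)" if "B \<in> P" for B using exE[OF that] unfolding f_def by (rule someI_ex)
  have fim: "f ` P \<subseteq> \<rho> - U" using fex by (auto simp: ex_def)
  have "\<not> inj_on f P"
  proof
    assume "inj_on f P"
    then have "card P \<le> card (\<rho> - U)" using card_inj_on_le[OF _ fim] fr by blast
    then show False using cD by simp
  qed
  then obtain B1 B2 where B12: "B1 \<in> P" "B2 \<in> P" "B1 \<noteq> B2" "f B1 = f B2"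
    unfolding inj_on_def by blast
  define \<sigma> where "\<sigma> = f B1"
  have e1: "ex B1 \<sigma>" unfolding \<sigma>_def using fex B12(1) .
  have e2: "ex B2 \<sigma>" unfolding \<sigma>_def B12(4) using fex B12(2) .
  have dj: "B1 \<inter> B2 = {}" using Pd B12 by blast
  have "\<exists>X Y. X \<in> P \<and> Y \<in> P \<and> X \<noteq> Y \<and> sub (fst \<sigma>) X \<and> (\<exists>k. fst \<sigma> k \<noteq> 0) \<and> sub (snd \<sigma>) Y"
  proof -
    have nb: False if "sub x B1" "sub x B2" "x k \<noteq> 0" for x k
    proof -
      have "k \<in> B1" "k \<in> B2" using that by (auto simp: sub_def)
      then show False using dj by blast
    qed
    show ?thesis
      using e1 e2 B12 unfolding ex_def by (metis nb)
  qed
  then obtain X Y where XY: "X \<in> P" "Y \<in> P" "X \<noteq> Y" "sub (fst \<sigma>) X" "\<exists>k. fst \<sigma> k \<noteq> 0" "sub (snd \<sigma>) Y"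
    by blast
  have sU: "\<sigma> \<in> \<rho>" "\<sigma> \<notin> U" using e1 by (auto simp: ex_def)
  have XYd: "X \<inter> Y = {}" using Pd XY by blast
  define Bn where "Bn = X \<union> Y"
  define P' where "P' = insert Bn (P - {X, Y})"
  define RB where "RB = R X \<union> R Y \<union> {\<sigma>}"
  define R' where "R' Z = (if Z = Bn then RB else R Z)" for Z
  have notBn: "Z \<noteq> Bn" if "Z \<in> P - {X, Y}" for Z
  proof
    assume "Z = Bn"
    then have "X \<subseteq> Z" unfolding Bn_def by auto
    moreover have "Z \<inter> X = {}" using Pd that XY by blast
    ultimately show False using Pne XY by blast
  qed
  have cP': "card P' < card P"
  proof -
    have "card P' \<le> card (P - {X, Y}) + 1" unfolding P'_def using card_insert_le[of "P - {X,Y}" Bn] fP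
      by (simp add: card_insert_if)
    also have "card (P - {X, Y}) = card P - 2" using XY fP by (simp add: card_Diff_subset)
    finally show ?thesis using P2 by simp
  qed
  have QX: "QB X" "QB Y" using PR XY by auto
  have RXY: "R X \<subseteq> \<rho>" "R Y \<subseteq> \<rho>" "card (R X) + 1 = card X" "card (R Y) + 1 = card Y"
    using PR XY by auto
  have sXY: "\<forall>\<tau>\<in>R X. sub (fst \<tau>) X \<and> sub (snd \<tau>) X" "\<forall>\<tau>\<in>R Y. sub (fst \<tau>) Y \<and> sub (snd \<tau>) Y"
    using PR XY by auto
  have sXU: "\<sigma> \<notin> R X" "\<sigma> \<notin> R Y" using sU XY unfolding U_def by auto
  have RXYd: "R X \<inter> R Y = {}" using Rd XY by blast
  have fRXY: "finite (R X)" "finite (R Y)" using fR XY by auto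
  have fXY: "finite X" "finite Y" using fBs XY by auto
  have cRB: "card RB + 1 = card Bn"
  proof -
    have "card RB = card (R X) + card (R Y) + 1"
      unfolding RB_def using fRXY RXYd sXU by (simp add: card_Un_disjoint)
    then show ?thesis unfolding Bn_def using RXY fXY XYd by (simp add: card_Un_disjoint)
  qed
  have RBs: "RB \<subseteq> \<rho>" unfolding RB_def using RXY sU by auto
  have QBn: "QB Bn"
    unfolding Bn_def
  proof (rule merge_Q[OF fin pos pres fr cr irr _ _ XYd _ _ QX RBs])
    show "X \<subseteq> A" "Y \<subseteq> A" "X \<noteq> {}" "Y \<noteq> {}" using Pne XY by auto
    show "card RB + 1 = card (X \<union> Y)" using cRB Bn_def by simp
    show "(fst \<sigma>, snd \<sigma>) \<in> RB" unfolding RB_def by simp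
    show "sub (fst \<sigma>) X" "sub (snd \<sigma>) Y" "\<exists>k. fst \<sigma> k \<noteq> 0" using XY by auto
    show "\<forall>\<tau>\<in>RB - {(fst \<sigma>, snd \<sigma>)}. sub (fst \<tau>) X \<and> sub (snd \<tau>) X \<or> sub (fst \<tau>) Y \<and> sub (snd \<tau>) Y"
      unfolding RB_def using sXY by auto
  qed
  have "inv A \<rho> P' R'"
    unfolding inv_def
  proof (intro conjI)
    show "finite P'" unfolding P'_def using fP by simp
    show "\<forall>B\<in>P'. B \<noteq> {} \<and> B \<subseteq> A" unfolding P'_def Bn_def using Pne XY by auto
    show "\<Union>P' = A" unfolding P'_def Bn_def using PU XY by auto
    show "\<forall>B\<in>P'. \<forall>B'\<in>P'. B \<noteq> B' \<longrightarrow> B \<inter> B' = {}"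
      unfolding P'_def Bn_def using Pd XY by blast
    show "\<forall>B\<in>P'. R' B \<subseteq> \<rho> \<and> card (R' B) + 1 = card B \<and> (\<forall>\<sigma>\<in>R' B. sub (fst \<sigma>) B \<and> sub (snd \<sigma>) B) \<and> QB B"
    proof
      fix B assume "B \<in> P'"
      then consider "B = Bn" | "B \<in> P - {X, Y}" "B \<noteq> Bn" unfolding P'_def using notBn by auto
      then show "R' B \<subseteq> \<rho> \<and> card (R' B) + 1 = card B \<and> (\<forall>\<sigma>\<in>R' B. sub (fst \<sigma>) B \<and> sub (snd \<sigma>) B) \<and> QB B"
      proof cases
        case 1
        have "\<forall>\<tau>\<in>RB. sub (fst \<tau>) Bn \<and> sub (snd \<tau>) Bn"
          unfolding RB_def Bn_def using sXY XY by (auto intro: sub_mono)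
        then show ?thesis using 1 RBs cRB QBn by (simp add: R'_def)
      next
        case 2
        then show ?thesis using PR by (simp add: R'_def)
      qed
    qed
    show "\<forall>B\<in>P'. \<forall>B'\<in>P'. B \<noteq> B' \<longrightarrow> R' B \<inter> R' B' = {}"
    proof (intro ballI impI)
      fix B B' assume h: "B \<in> P'" "B' \<in> P'" "B \<noteq> B'"
      have key: "RB \<inter> R Z = {}" if "Z \<in> P - {X, Y}" for Z
      proof -
        have "R X \<inter> R Z = {}" "R Y \<inter> R Z = {}" using Rd that XY by auto
        moreover have "\<sigma> \<notin> R Z" using sU that unfolding U_def by auto
        ultimately show ?thesis unfolding RB_def by auto
      qed
      show "R' B \<inter> R' B' = {}"
      proof (cases "B = Bn")
        case True
        then have "B' \<in> P - {X, Y}" "B' \<noteq> Bn" using h unfolding P'_def by auto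
        then show ?thesis using True key by (simp add: R'_def)
      next
        case False
        then have B: "B \<in> P - {X, Y}" using h unfolding P'_def by auto
        show ?thesis
        proof (cases "B' = Bn")
          case True
          then show ?thesis using False key[OF B] by (auto simp: R'_def)
        next
          case False2: False
          then have "B' \<in> P - {X, Y}" using h unfolding P'_def by auto
          then show ?thesis using B False False2 Rd h by (simp add: R'_def)
        qed
      qed
    qed
  qed
  then show ?thesis using cP' by blast
qed



lemma inv_final:
  assumes fin: "finite A" and pos: "0 \<notin> A" and pres: "is_presentation A \<rho>" and fr: "finite \<rho>"
    and cr: "card \<rho> + 1 = card A" and irr: "\<forall>x\<in>A. x \<notin> monoid_gen (A - {x})"
  shows "inv A \<rho> P R \<Longrightarrow> QB A"
proof (induction "card P" arbitrary: P R rule: less_induct)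
  case less
  show ?case
  proof (cases "2 \<le> card P")
    case True
    then obtain P' R' where "inv A \<rho> P' R'" "card P' < card P"
      using inv_step[OF fin pos pres fr cr irr less.prems] by blast
    then show ?thesis using less.hyps by blast
  next
    case False
    have I: "finite P" "\<Union>P = A" "\<forall>B\<in>P. QB B" using less.prems unfolding inv_def by auto
    have "A \<noteq> {}" using cr by auto
    then have "P \<noteq> {}" using I by auto
    then have "card P > 0" using I(1) by (simp add: card_gt_0_iff)
    then have "card P = 1" using False by linarith
    then obtain B where "P = {B}" by (rule card_1_singletonE)
    then show ?thesis using I by auto
  qed
qed

lemma inv_init:
  assumes fin: "finite A" and pos: "0 \<notin> A"
  shows "inv A \<rho> ((\<lambda>a. {a}) ` A) (\<lambda>_. {})"
  unfolding inv_def QB_def using fin by auto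

lemma mg_pos_ge:
  assumes "x \<in> monoid_gen A" "0 < x" "finite A"
  shows "Min A \<le> x"
proof -
  obtain B f where b: "finite B" "B \<subseteq> A" "x = (\<Sum>r\<in>B. f r * r)"
    using assms(1) unfolding monoid_gen_def by blast
  have "\<exists>r\<in>B. f r * r \<noteq> 0"
  proof (rule ccontr)
    assume "\<not> (\<exists>r\<in>B. f r * r \<noteq> 0)"
    then have "x = 0" using b(3) by (intro HOL.trans[OF b(3)] sum.neutral) blast
    then show False using assms(2) by simp
  qed
  then obtain r where r: "r \<in> B" "f r * r \<noteq> 0" by blast
  have "f r * r \<le> x" unfolding b(3) using b(1) r(1) by (intro member_le_sum) auto
  moreover have "r \<le> f r * r" using r by simp
  moreover have "Min A \<le> r" using r b assms(3) by auto
  ultimately show ?thesis by linarith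
qed

theorem corollary2p7:
  fixes S A :: "nat set"
  assumes "numerical_semigroup S"
    and "S \<noteq> UNIV"
    and "is_min_gen_sys S A"
    and "complete_intersection S A"
  shows "real (card A) \<le> log 2 (real (conductor S)) + 1"
proof -
  have c1: "1 \<le> conductor S" by (simp add: conductor_def)
  show ?thesis
  proof (cases "finite A")
    case False
    then show ?thesis using c1 by simp
  next
    case fin: True
    obtain \<rho> where rho: "finite \<rho>" "is_minimal_presentation A \<rho>" "card \<rho> = card A - 1"
      using assms(4) unfolding complete_intersection_def by blast
    have pres: "is_presentation A \<rho>" using rho(2) by (simp add: is_minimal_presentation_def)
    have SA: "monoid_gen A = S" using assms(3) by (simp add: is_min_gen_sys_def)
    have pos: "0 \<notin> A" using zero_notin[OF assms(3)] .
    have irr: "\<forall>x\<in>A. x \<notin> monoid_gen (A - {x})" using min_gen_irred[OF assms(3)] by blast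
    have nsg: "0 \<in> S" "\<forall>x\<in>S. \<forall>y\<in>S. x + y \<in> S" "finite (UNIV - S)"
      using assms(1) by (auto simp: numerical_semigroup_def)
    have Ane: "A \<noteq> {}"
    proof
      assume "A = {}"
      then have "S \<subseteq> {0}" using SA unfolding monoid_gen_def by auto
      then have "UNIV - {0} \<subseteq> UNIV - S" by auto
      then have "finite (UNIV - {0::nat})" using nsg(3) finite_subset by blast
      then show False by simp
    qed
    have cr: "card \<rho> + 1 = card A" using rho(3) fin Ane by (simp add: card_gt_0_iff)
    have QA: "QB A" using inv_final[OF fin pos pres rho(1) cr irr inv_init[OF fin pos]] .
    define m where "m = Min A"
    have mA: "m \<in> A" using fin Ane by (simp add: m_def)
    have mp: "0 < m" using mA pos by (cases m) auto
    have "Gcd A \<noteq> 0" using mA mp by (metis Gcd_dvd dvd_0_left_iff less_irrefl)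
    then have g1: "1 \<le> Gcd A" by (metis One_nat_def Suc_leI neq0_conv)
    have "2 ^ (card A - 1) \<le> Gcd A * 2 ^ (card A - 1)" using mult_le_mono1[OF g1, of "2 ^ (card A - 1)"] by simp
    also have "\<dots> \<le> m" using QA mA by (simp add: QB_def)
    finally have pm: "2 ^ (card A - 1) \<le> m" .
    have ge: "\<forall>x\<in>S. 0 < x \<longrightarrow> m \<le> x" using mg_pos_ge[OF _ _ fin] SA m_def by blast
    have m1: "m \<noteq> 1"
    proof
      assume "m = 1"
      have "(\<Sum>r\<in>{m}. (1::nat) * r) \<in> monoid_gen A" using mA by (intro mg_sum) auto
      then have "1 \<in> S" using SA \<open>m = 1\<close> by simp
      have "n \<in> S" for n
      proof (induction n)
        case 0 show ?case using nsg(1) by simp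
      next
        case (Suc n)
        have "n + 1 \<in> S" using nsg(2) Suc \<open>1 \<in> S\<close> by blast
        then show ?case by simp
      qed
      then show False using assms(2) by auto
    qed
    have mm: "0 < m - 1" "m - 1 < m" using mp m1 by auto
    have "m - 1 \<notin> S"
    proof
      assume "m - 1 \<in> S"
      then have "m \<le> m - 1" using ge mm(1) by blast
      then show False using mm(2) by simp
    qed
    then have "m - 1 \<le> frobenius S" unfolding frobenius_def using nsg(3) by (intro Max_ge) auto
    then have "m \<le> conductor S" unfolding conductor_def by simp
    with pm have pc: "2 ^ (card A - 1) \<le> conductor S" by simp
    have "real (card A - 1) = log 2 (2 ^ (card A - 1))" by simp
    also have "\<dots> \<le> log 2 (real (conductor S))"
      using pc c1 by (subst log_le_cancel_iff) (auto simp del: log_pow_cancel simp: of_nat_le_iff[symmetric])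
    finally show ?thesis using Ane fin by (simp add: card_gt_0_iff)
  qed
qed

end
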